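(* Fix $L\in\mathbb Z$ and work on $Y_L=\mathbb R\times(0,2^L]\times\mathbb R$ with the objects described in the context. The quadruple $(Y_L,\mu,\nu,\mathcal C)$, where $\mathcal C(A)=\mathcal M(\mathcal N(\mathcal Q(A)))$ and $\mathcal E=\mathcal D_L$, satisfies the canopy condition for every choice of parameters $\Phi,K\ge2$.
   Context: Dyadic intervals $I(m,l)=(2^lm,2^l(m+1)]$; tiles $H(m,l,n)=I(m,l)\times(2^{l-1},2^l]\times I(n,-l)$. $\mathcal D_L$ = strips $D(m,l)=I(m,l)\times(0,2^l]\times\mathbb R$ with $l\le L$, $\sigma(D(m,l))=2^l$. $\mathcal T_L$ = trees $T(m,l,n)=\bigcup_{l'\le l}\bigcup_{m':\,I(m',l')\subseteq I(m,l)}H(m',l',N(n,l'))$ with $l\le L$ ($N(n,l')$ the integer with $I(n,-l)\subseteq I(N(n,l'),-l')$), $\tau(T(m,l,n))=2^l$. Outer measures on $Y_L$: $\mu(A)=\inf\{\sum_{S\in\mathcal S'}\sigma(S):\mathcal S'\subseteq\mathcal D_L,A\subseteq\bigcup\mathcal S'\}$, $\nu$ likewise from $(\mathcal T_L,\tau)$. $\pi$ = projection onto first coordinate, $|\cdot|$ Lebesgue measure. For $E\in\mathcal D_L$, $E_+=\{(x,s,\xi)\in E:s>\sigma(E)/2\}$. $\mathcal Q(A)=\{E\in\mathcal D_L:E_+\cap A\ne\varnothing\}$. For $\mathcal D_1\subseteq\mathcal D_L$: $\mathcal N(\mathcal D_1)=\{E\in\mathcal D_L:|\pi(E)\cap\pi(\bigcup\mathcal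 D_1)|\ge|\pi(E)|/2\}$; $\mathcal M(\mathcal D_1)$ = elements of $\mathcal D_1$ maximal under inclusion. $\mathbf B_{\mathcal C}(A)=\bigcup_{E\in\mathcal C(A)}E$. A $\mu$-covering function with parameter $\Phi$: a map $\mathcal C$ assigning to each $A$ a subcollection of pairwise disjoint elements of $\mathcal E$ with $A\subseteq\mathbf B_{\mathcal C}(A)$, $\mu(\mathbf B_{\mathcal C}(A))\le\Phi\mu(A)$, $\mathbf B_{\mathcal C}$ monotone. A collection $\mathcal A$ of pairwise disjoint sets is $\nu$-Carathéodory (parameter $K$) if $\sum_{A\in\mathcal A}\nu(U\cap A)\le K\nu(U\cap\bigcup\mathcal A)$ for all $U$. Canopy condition (parameters $\Phi,K$): $\mathcal C$ is a $\mu$-covering function with parameter $\Phi$, and for every $\nu$-Carathéodory collection $\mathcal A$ (parameter $K$) and every $D$ disjoint from $\mathbf B_{\mathcal C}(\bigcup_{A\in\mathcal A}A)$, $\mathcal A\cup\{D\}$ is $\nu$-Carathéodory (parameter $K$). *)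

theory Defs
  imports "HOL-Analysis.Analysis"
begin

type_synonym pt = "real \<times> real \<times> real"

definition dyI :: "int \<Rightarrow> int \<Rightarrow> real set" where
  "dyI m l = {(2::real) powi l * of_int m <.. (2::real) powi l * of_int (m + 1)}"

definition tile :: "int \<Rightarrow> int \<Rightarrow> int \<Rightarrow> pt set" where
  "tile m l n = dyI m l \<times> ({(2::real) powi (l - 1) <.. (2::real) powi l} \<times> dyI n (- l))"

definition YL :: "int \<Rightarrow> pt set" where
  "YL L = UNIV \<times> ({0 <.. (2::real) powi L} \<times> UNIV)"

definition strip :: "int \<Rightarrow> int \<Rightarrow> pt set" where
  "strip m l = dyI m l \<times> ({0 <.. (2::real) powi l} \<times> UNIV)"

definition strips :: "int \<Rightarrow> pt set set" where
  "strips L = {strip m l | m l. l \<le> L}"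

definition sigma_strip :: "pt set \<Rightarrow> real" where
  "sigma_strip E = (THE s. \<exists>m l. E = strip m l \<and> s = (2::real) powi l)"

definition Nidx :: "int \<Rightarrow> int \<Rightarrow> int \<Rightarrow> int" where
  "Nidx n l l' = (THE N. dyI n (- l) \<subseteq> dyI N (- l'))"

definition tree :: "int \<Rightarrow> int \<Rightarrow> int \<Rightarrow> pt set" where
  "tree m l n = (\<Union>l'\<in>{..l}. \<Union>m'\<in>{m'. dyI m' l' \<subseteq> dyI m l}. tile m' l' (Nidx n l l'))"

definition trees :: "int \<Rightarrow> pt set set" where
  "trees L = {tree m l n | m l n. l \<le> L}"

definition tau_tree :: "pt set \<Rightarrow> real" where
  "tau_tree T = (THE s. \<exists>m l n. T = tree m l n \<and> s = (2::real) powi l)"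

definition outer_measure :: "'a set set \<Rightarrow> ('a set \<Rightarrow> real) \<Rightarrow> 'a set \<Rightarrow> ennreal" where
  "outer_measure S w A =
     (INF S' \<in> {S'. S' \<subseteq> S \<and> A \<subseteq> \<Union>S'}. (\<Sum>\<^sub>\<infinity> E\<in>S'. ennreal (w E)))"

definition muL :: "int \<Rightarrow> pt set \<Rightarrow> ennreal" where
  "muL L = outer_measure (strips L) sigma_strip"

definition nuL :: "int \<Rightarrow> pt set \<Rightarrow> ennreal" where
  "nuL L = outer_measure (trees L) tau_tree"

definition plus_part :: "pt set \<Rightarrow> pt set" where
  "plus_part E = {p \<in> E. fst (snd p) > sigma_strip E / 2}"

definition Qc :: "int \<Rightarrow> pt set \<Rightarrow> pt set set" where
  "Qc L A = {E \<in> strips L. plus_part E \<inter> A \<noteq> {}}"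

definition Nc :: "int \<Rightarrow> pt set set \<Rightarrow> pt set set" where
  "Nc L D1 = {E \<in> strips L.
      emeasure lborel (fst ` E \<inter> fst ` (\<Union>D1)) \<ge> emeasure lborel (fst ` E) / 2}"

definition Mc :: "'a set set \<Rightarrow> 'a set set" where
  "Mc D1 = {E \<in> D1. \<forall>F\<in>D1. E \<subseteq> F \<longrightarrow> F = E}"

definition Cc :: "int \<Rightarrow> pt set \<Rightarrow> pt set set" where
  "Cc L A = Mc (Nc L (Qc L A))"

definition covering_function ::
  "'a set \<Rightarrow> ('a set \<Rightarrow> ennreal) \<Rightarrow> 'a set set \<Rightarrow> real \<Rightarrow> ('a set \<Rightarrow> 'a set set) \<Rightarrow> bool" where
  "covering_function Y mu E Phi C \<longleftrightarrow>
     (\<forall>A. A \<subseteq> Y \<longrightarrow>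
        C A \<subseteq> E \<and> disjoint (C A) \<and> A \<subseteq> \<Union>(C A) \<and>
        mu (\<Union>(C A)) \<le> ennreal Phi * mu A) \<and>
     (\<forall>A A'. A \<subseteq> A' \<and> A' \<subseteq> Y \<longrightarrow> \<Union>(C A) \<subseteq> \<Union>(C A'))"

definition caratheodory :: "'a set \<Rightarrow> ('a set \<Rightarrow> ennreal) \<Rightarrow> real \<Rightarrow> 'a set set \<Rightarrow> bool" where
  "caratheodory Y nu K \<A> \<longleftrightarrow>
     disjoint \<A> \<and> (\<forall>A\<in>\<A>. A \<subseteq> Y) \<and>
     (\<forall>U. U \<subseteq> Y \<longrightarrow> (\<Sum>\<^sub>\<infinity> A\<in>\<A>. nu (U \<inter> A)) \<le> ennreal K * nu (U \<inter> \<Union>\<A>))"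

definition canopy_condition ::
  "'a set \<Rightarrow> ('a set \<Rightarrow> ennreal) \<Rightarrow> ('a set \<Rightarrow> ennreal) \<Rightarrow> 'a set set \<Rightarrow> real \<Rightarrow> real
    \<Rightarrow> ('a set \<Rightarrow> 'a set set) \<Rightarrow> bool" where
  "canopy_condition Y mu nu E Phi K C \<longleftrightarrow>
     covering_function Y mu E Phi C \<and>
     (\<forall>\<A> D. caratheodory Y nu K \<A> \<and> D \<subseteq> Y \<and> D \<inter> \<Union>(C (\<Union>\<A>)) = {}
        \<longrightarrow> caratheodory Y nu K (insert D \<A>))"

end

theory Submission
  imports Defs
begin

lemma p2_pos: "(0::real) < 2 powi l" by simp

lemma p2_le_iff: "((2::real) powi a \<le> 2 powi b) = (a \<le> b)"
  by (metis linorder_not_le order_less_imp_le power_int_increasing power_int_strict_increasing one_le_numeral one_less_numeral_iff semiring_norm(76))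

lemma p2_less_iff: "((2::real) powi a < 2 powi b) = (a < b)"
  by (meson linorder_not_le p2_le_iff)

lemma p2_add: "(2::real) powi (a + b) = 2 powi a * 2 powi b"
  by (simp add: power_int_add)

lemma p2_diff1: "(2::real) powi (l - 1) = 2 powi l / 2"
  by (simp add: power_int_diff)

definition dyidx :: "int \<Rightarrow> real \<Rightarrow> int" where
  "dyidx l x = \<lceil>x / 2 powi l\<rceil> - 1"

lemma mem_dyI: "x \<in> dyI m l \<longleftrightarrow> m = dyidx l x"
proof -
  have p: "(0::real) < 2 powi l" by simp
  have "x \<in> dyI m l \<longleftrightarrow> of_int m < x / 2 powi l \<and> x / 2 powi l \<le> of_int m + 1"
    using p by (simp add: dyI_def pos_less_divide_eq pos_divide_le_eq mult.commute)
  also have "\<dots> \<longleftrightarrow> \<lceil>x / 2 powi l\<rceil> = m + 1"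
    by (simp add: ceiling_eq_iff)
  finally show ?thesis unfolding dyidx_def by auto
qed

lemma dyI_ne: "dyI m l \<noteq> {}"
  using mem_dyI[of "2 powi l * (of_int m + 1)" m l] by (auto simp: dyI_def)

lemma emeasure_dyI: "emeasure lborel (dyI m l) = ennreal (2 powi l)"
  unfolding dyI_def by (simp add: algebra_simps)

lemma dyI_meas[measurable]: "dyI m l \<in> sets lborel"
  unfolding dyI_def by simp

lemma dyI_meas'[simp]: "dyI m l \<in> sets borel"
  unfolding dyI_def by simp

lemma dy_nest:
  assumes "l \<le> l'" "x \<in> dyI m l" "x \<in> dyI m' l'"
  shows "dyI m l \<subseteq> dyI m' l'"
proof
  fix y assume y: "y \<in> dyI m l"
  define p where "p = (2::real) powi l"
  define q where "q = (2::int) ^ nat (l' - l)"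
  have p: "p > 0" by (simp add: p_def)
  have pq: "(2::real) powi l' = p * of_int q"
  proof -
    have "(2::real) powi l * 2 powi (l' - l) = 2 powi (l + (l' - l))" by (simp only: p2_add)
    hence "(2::real) powi l' = p * 2 powi (l' - l)" by (simp add: p_def)
    also have "\<dots> = p * 2 ^ nat (l' - l)" using assms(1) by (simp add: power_int_nonneg_exp)
    finally show ?thesis by (simp add: q_def)
  qed
  have x1: "p * of_int m < x" "x \<le> p * (of_int m + 1)" using assms(2) by (auto simp: dyI_def p_def)
  have x2: "p * of_int q * of_int m' < x" "x \<le> p * of_int q * (of_int m' + 1)"
    using assms(3) pq by (auto simp: dyI_def)
  have "p * of_int (q * m') < p * of_int (m + 1)" using x1 x2 by (simp add: algebra_simps)
  hence "of_int (q * m') < (of_int (m + 1) :: real)" using p by simp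
  hence i1: "q * m' \<le> m" by linarith
  have "p * of_int m < p * of_int (q * (m' + 1))" using x1 x2 by (simp add: algebra_simps)
  hence "of_int m < (of_int (q * (m' + 1)) :: real)" using p by simp
  hence i2: "m + 1 \<le> q * (m' + 1)" by linarith
  have y1: "p * of_int m < y" "y \<le> p * (of_int m + 1)" using y by (auto simp: dyI_def p_def)
  have "of_int (q * m') \<le> (of_int m :: real)" using i1 by linarith
  hence "p * of_int (q * m') \<le> p * of_int m" using p by (intro mult_left_mono) auto
  hence "p * of_int q * of_int m' < y" using y1(1) by (simp add: mult.assoc)
  moreover have "p * (of_int m + 1) \<le> p * of_int (q * (m' + 1))" using i2 p
    by (metis mult_le_cancel_left_pos of_int_add of_int_le_iff of_int_1)
  hence "y \<le> p * of_int q * (of_int m' + 1)" using y1 by (simp add: algebra_simps)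
  ultimately show "y \<in> dyI m' l'" using pq by (simp add: dyI_def)
qed

lemma dyI_level: assumes "dyI m l \<subseteq> dyI m' l'" shows "l \<le> l'"
proof -
  have "emeasure lborel (dyI m l) \<le> emeasure lborel (dyI m' l')"
    using assms dyI_meas by (intro emeasure_mono) auto
  hence "(2::real) powi l \<le> 2 powi l'" by (simp add: emeasure_dyI)
  thus ?thesis by (simp add: p2_le_iff)
qed

lemma dyI_inj: assumes "dyI m l = dyI m' l'" shows "m = m' \<and> l = l'"
proof -
  have "l = l'" using dyI_level assms by (metis order_antisym order_refl)
  moreover obtain x where "x \<in> dyI m l" using dyI_ne by blast
  ultimately show ?thesis using assms mem_dyI by metis
qed

lemma dy_cases: "dyI m l \<subseteq> dyI m' l' \<or> dyI m' l' \<subseteq> dyI m l \<or> dyI m l \<inter> dyI m' l' = {}"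
  by (metis disjoint_iff dy_nest linorder_le_cases)


definition lev :: "real \<Rightarrow> int" where "lev s = \<lceil>log 2 s\<rceil>"

lemma lev: assumes "0 < s" shows "2 powi (lev s - 1) < s" "s \<le> 2 powi (lev s)"
proof -
  have a: "log 2 s \<le> of_int (lev s)" unfolding lev_def by simp
  have b: "of_int (lev s - 1) < log 2 s" unfolding lev_def by linarith
  have "s \<le> 2 powr of_int (lev s)" using a assms by (simp add: log_le_iff le_log_iff)
  thus "s \<le> 2 powi (lev s)" by (simp add: powr_real_of_int')
  have "2 powr of_int (lev s - 1) < s" using b assms by (simp add: less_log_iff del: of_int_diff)
  moreover have "2 powr of_int (lev s - 1) = (2::real) powi (lev s - 1)" by (rule powr_real_of_int') auto
  ultimately show "2 powi (lev s - 1) < s" by simp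
qed

lemma lev_unique: assumes "2 powi (k - 1) < s" "s \<le> 2 powi k" shows "lev s = k"
proof -
  have s: "0 < s" using assms(1) by (meson order.strict_trans zero_less_power_int zero_less_numeral)
  have "2 powi (lev s - 1) < (2::real) powi k" using lev(1)[OF s] assms(2) by linarith
  hence "lev s - 1 < k" by (simp add: p2_less_iff)
  moreover have "2 powi (k - 1) < (2::real) powi lev s" using lev(2)[OF s] assms(1) by linarith
  hence "k - 1 < lev s" by (simp add: p2_less_iff)
  ultimately show ?thesis by linarith
qed

lemma lev_le: assumes "0 < s" "s \<le> 2 powi l" shows "lev s \<le> l"
proof -
  have "2 powi (lev s - 1) < (2::real) powi l" using lev(1)[OF assms(1)] assms(2) by linarith
  hence "lev s - 1 < l" by (simp add: p2_less_iff)
  thus ?thesis by linarith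
qed

lemma lev_p2: "lev (2 powi l) = l"
  by (rule lev_unique) (auto simp: p2_less_iff)

lemma strip_mem: "(x, s, xi) \<in> strip m l \<longleftrightarrow> x \<in> dyI m l \<and> 0 < s \<and> s \<le> 2 powi l"
  by (auto simp: strip_def)

lemma fst_strip: "fst ` strip m l = dyI m l"
proof
  show "fst ` strip m l \<subseteq> dyI m l" by (auto simp: strip_def)
  show "dyI m l \<subseteq> fst ` strip m l"
  proof
    fix x assume "x \<in> dyI m l"
    hence "(x, 2 powi l, 0) \<in> strip m l" by (simp add: strip_mem)
    thus "x \<in> fst ` strip m l" by force
  qed
qed

lemma strip_sub_iff: "strip m l \<subseteq> strip m' l' \<longleftrightarrow> dyI m l \<subseteq> dyI m' l'"
proof
  assume "strip m l \<subseteq> strip m' l'"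
  hence "fst ` strip m l \<subseteq> fst ` strip m' l'" by blast
  thus "dyI m l \<subseteq> dyI m' l'" by (simp add: fst_strip)
next
  assume a: "dyI m l \<subseteq> dyI m' l'"
  hence "l \<le> l'" by (rule dyI_level)
  hence "(2::real) powi l \<le> 2 powi l'" by (simp add: p2_le_iff)
  thus "strip m l \<subseteq> strip m' l'" using a by (auto simp: strip_def)
qed

lemma strip_inj: "strip m l = strip m' l' \<Longrightarrow> m = m' \<and> l = l'"
  by (metis dyI_inj fst_strip)

lemma sigma_strip: "sigma_strip (strip m l) = 2 powi l"
  unfolding sigma_strip_def by (rule the_equality) (auto dest: strip_inj)

lemma strip_disj: "strip m l \<inter> strip m' l' = {} \<longleftrightarrow> dyI m l \<inter> dyI m' l' = {}"
proof
  assume a: "strip m l \<inter> strip m' l' = {}"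
  show "dyI m l \<inter> dyI m' l' = {}"
  proof (rule ccontr)
    assume "dyI m l \<inter> dyI m' l' \<noteq> {}"
    then obtain x where "x \<in> dyI m l" "x \<in> dyI m' l'" by blast
    hence "(x, min (2 powi l) (2 powi l'), 0) \<in> strip m l \<inter> strip m' l'" by (auto simp: strip_mem)
    thus False using a by blast
  qed
qed (auto simp: strip_def)

lemma plus_strip: "plus_part (strip m l) = {p \<in> strip m l. 2 powi (l - 1) < fst (snd p)}"
  by (simp add: plus_part_def sigma_strip p2_diff1)

lemma strips_mem: "E \<in> strips L \<longleftrightarrow> (\<exists>m l. E = strip m l \<and> l \<le> L)"
  by (auto simp: strips_def)

lemma strips_countable: "countable (strips L)"
proof -
  have "strips L \<subseteq> (\<lambda>(m, l). strip m l) ` UNIV" by (auto simp: strips_def)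
  thus ?thesis by (rule countable_subset) simp
qed

lemma point_strip:
  assumes "0 < s"
  shows "(x, s, xi) \<in> plus_part (strip (dyidx (lev s) x) (lev s))"
  using lev[OF assms] mem_dyI by (simp add: plus_strip strip_mem assms)

lemma Nidx: assumes "l' \<le> l" shows "dyI n (- l) \<subseteq> dyI (Nidx n l l') (- l')"
  and "dyI n (- l) \<subseteq> dyI N (- l') \<Longrightarrow> Nidx n l l' = N"
proof -
  obtain x0 where x0: "x0 \<in> dyI n (- l)" using dyI_ne by blast
  have ex: "dyI n (- l) \<subseteq> dyI (dyidx (- l') x0) (- l')"
    using x0 assms by (intro dy_nest[of "- l" "- l'" x0]) (auto simp: mem_dyI)
  have un: "N' = dyidx (- l') x0" if "dyI n (- l) \<subseteq> dyI N' (- l')" for N'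
    using that x0 mem_dyI by blast
  have "Nidx n l l' = dyidx (- l') x0"
    unfolding Nidx_def using ex un by (rule the_equality)
  thus "dyI n (- l) \<subseteq> dyI (Nidx n l l') (- l')" using ex by simp
  show "dyI n (- l) \<subseteq> dyI N (- l') \<Longrightarrow> Nidx n l l' = N" using un \<open>Nidx n l l' = _\<close> by metis
qed

lemma Nidx_refl: "Nidx n l l = n"
  using Nidx(2)[of l l n n] by simp

lemma Nidx_trans: assumes "l'' \<le> l'" "l' \<le> l" shows "Nidx (Nidx n l l') l' l'' = Nidx n l l''"
proof -
  have "dyI n (- l) \<subseteq> dyI (Nidx (Nidx n l l') l' l'') (- l'')"
    using Nidx(1)[OF assms(2), of n] Nidx(1)[OF assms(1), of "Nidx n l l'"] by blast
  thus ?thesis using Nidx(2) assms by (metis order_trans)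
qed

lemma tree_mem: "(x, s, xi) \<in> tree m l n \<longleftrightarrow>
   x \<in> dyI m l \<and> 0 < s \<and> s \<le> 2 powi l \<and> xi \<in> dyI (Nidx n l (lev s)) (- lev s)"
proof
  assume "(x, s, xi) \<in> tree m l n"
  then obtain l' m' where l': "l' \<le> l" "dyI m' l' \<subseteq> dyI m l"
    and t: "(x, s, xi) \<in> tile m' l' (Nidx n l l')"
    by (auto simp: tree_def)
  have s: "2 powi (l' - 1) < s" "s \<le> 2 powi l'" using t by (auto simp: tile_def)
  hence "lev s = l'" by (rule lev_unique)
  moreover have "0 < s" using s(1) by (meson order.strict_trans zero_less_power_int zero_less_numeral)
  moreover have "s \<le> 2 powi l" using s(2) l'(1) p2_le_iff by (meson order_trans)
  ultimately show "x \<in> dyI m l \<and> 0 < s \<and> s \<le> 2 powi l \<and> xi \<in> dyI (Nidx n l (lev s)) (- lev s)"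
    using t l' by (auto simp: tile_def)
next
  assume a: "x \<in> dyI m l \<and> 0 < s \<and> s \<le> 2 powi l \<and> xi \<in> dyI (Nidx n l (lev s)) (- lev s)"
  define l' where "l' = lev s"
  have l': "l' \<le> l" using a lev_le l'_def by blast
  define m' where "m' = dyidx l' x"
  have x: "x \<in> dyI m' l'" by (simp add: m'_def mem_dyI)
  have sub: "dyI m' l' \<subseteq> dyI m l" using dy_nest[OF l' x] a by blast
  have "(x, s, xi) \<in> tile m' l' (Nidx n l l')"
    using x a lev[of s] by (auto simp: tile_def l'_def)
  thus "(x, s, xi) \<in> tree m l n" using l' sub unfolding tree_def by blast
qed

lemma tree_sub_strip: "tree m l n \<subseteq> strip m l"
  by (auto simp: tree_mem strip_mem)

lemma tree_top: "(2 powi l * (of_int m + 1), 2 powi l, 2 powi (- l) * (of_int n + 1)) \<in> tree m l n"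
  by (simp add: tree_mem lev_p2 Nidx_refl dyI_def)

lemma tree_level: assumes "tree m l n \<subseteq> tree m' l' n'" shows "l \<le> l'"
proof -
  have "(2 powi l * (of_int m + 1), 2 powi l, 2 powi (- l) * (of_int n + 1)) \<in> tree m' l' n'"
    using assms tree_top by blast
  hence "(2::real) powi l \<le> 2 powi l'" by (simp only: tree_mem)
  thus ?thesis by (simp add: p2_le_iff)
qed

lemma tau_tree: "tau_tree (tree m l n) = 2 powi l"
  unfolding tau_tree_def
  by (rule the_equality) (auto, metis order_antisym order_refl tree_level)

lemma trees_countable: "countable (trees L)"
proof -
  have "trees L \<subseteq> (\<lambda>(m, l, n). tree m l n) ` UNIV" by (auto simp: trees_def)
  thus ?thesis by (rule countable_subset) simp
qed

lemma trees_mem: "T \<in> trees L \<longleftrightarrow> (\<exists>m l n. T = tree m l n \<and> l \<le> L)"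
  by (auto simp: trees_def)


lemma ens[simp]: "(f :: 'a \<Rightarrow> ennreal) summable_on A"
  by (rule nonneg_summable_on_complete) simp

lemma fin_le_infsum:
  fixes f :: "'a \<Rightarrow> ennreal"
  assumes "finite A" "A \<subseteq> B"
  shows "sum f A \<le> infsum f B"
proof -
  have "infsum f A \<le> infsum f B"
    using assms by (intro infsum_mono_neutral) auto
  thus ?thesis using assms(1) by simp
qed

lemma infsum_mono_set:
  fixes f :: "'a \<Rightarrow> ennreal"
  assumes "A \<subseteq> B" shows "infsum f A \<le> infsum f B"
  using assms by (intro infsum_mono_neutral) auto

lemma single_le_infsum:
  fixes f :: "'a \<Rightarrow> ennreal"
  assumes "i \<in> I" shows "f i \<le> infsum f I"
  using fin_le_infsum[of "{i}" I f] assms by simp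

lemma infsum_UB:
  fixes g :: "'b \<Rightarrow> ennreal"
  assumes "X \<subseteq> \<Union>(F ` I)"
  shows "infsum g X \<le> (\<Sum>\<^sub>\<infinity>i\<in>I. infsum g (F i))"
proof (rule infsum_le_finite_sums)
  show "g summable_on X" by simp
  fix G assume G: "finite G" "G \<subseteq> X"
  have "\<forall>x\<in>G. \<exists>i\<in>I. x \<in> F i" using G assms by blast
  then obtain c where c: "\<And>x. x \<in> G \<Longrightarrow> c x \<in> I \<and> x \<in> F (c x)" by metis
  have "sum g G = (\<Sum>i\<in>c ` G. sum g {x \<in> G. c x = i})"
    using G(1) by (rule sum.image_gen)
  also have "\<dots> \<le> (\<Sum>i\<in>c ` G. infsum g (F i))"
  proof (rule sum_mono)
    fix i assume "i \<in> c ` G"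
    have "{x \<in> G. c x = i} \<subseteq> F i" using c by auto
    thus "sum g {x \<in> G. c x = i} \<le> infsum g (F i)" using G(1) by (intro fin_le_infsum) auto
  qed
  also have "\<dots> \<le> (\<Sum>\<^sub>\<infinity>i\<in>I. infsum g (F i))"
    using G(1) c by (intro fin_le_infsum) auto
  finally show "sum g G \<le> (\<Sum>\<^sub>\<infinity>i\<in>I. infsum g (F i))" .
qed

lemma infsum_image_le:
  fixes g :: "'b \<Rightarrow> ennreal"
  shows "infsum g (h ` A) \<le> (\<Sum>\<^sub>\<infinity>a\<in>A. g (h a))"
proof -
  have "infsum g (h ` A) \<le> (\<Sum>\<^sub>\<infinity>a\<in>A. infsum g {h a})"
    by (rule infsum_UB) auto
  thus ?thesis by simp
qed

lemma nn_integral_count_space_infsum: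
  fixes f :: "'a \<Rightarrow> ennreal"
  assumes "countable I"
  shows "(\<integral>\<^sup>+i. f i \<partial>count_space I) = (\<Sum>\<^sub>\<infinity>i\<in>I. f i)"
proof (cases "finite I")
  case True
  thus ?thesis by (simp add: nn_integral_count_space_finite)
next
  case False
  define g where "g = from_nat_into I"
  have bij: "bij_betw g UNIV I" unfolding g_def using assms False by (rule bij_betw_from_nat_into)
  have "(\<integral>\<^sup>+i. f i \<partial>count_space I) = (\<integral>\<^sup>+x. f (g x) \<partial>count_space UNIV)"
    using nn_integral_bij_count_space[OF bij, of f] by simp
  also have "\<dots> = (\<Sum>x. f (g x))" by (rule nn_integral_count_space_nat)
  also have "\<dots> = (\<Sum>\<^sub>\<infinity>x\<in>UNIV. f (g x))"
  proof -
    have "((\<lambda>x. f (g x)) has_sum (\<Sum>\<^sub>\<infinity>x\<in>UNIV. f (g x))) UNIV"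
      by (rule has_sum_infsum) simp
    hence "(\<lambda>x. f (g x)) sums (\<Sum>\<^sub>\<infinity>x\<in>UNIV. f (g x))" by (rule has_sum_imp_sums)
    thus ?thesis by (rule sums_unique[symmetric])
  qed
  also have "\<dots> = (\<Sum>\<^sub>\<infinity>i\<in>I. f i)" using bij by (rule infsum_reindex_bij_betw)
  finally show ?thesis .
qed

lemma emeasure_UN_infsum:
  assumes "countable I" "disjoint_family_on X I" "\<And>i. i \<in> I \<Longrightarrow> X i \<in> sets M"
  shows "emeasure M (\<Union>(X ` I)) = (\<Sum>\<^sub>\<infinity>i\<in>I. emeasure M (X i))"
  using emeasure_UN_countable[of I X M] assms nn_integral_count_space_infsum[OF assms(1)] by simp


lemma infsum_cmult_ennreal:
  fixes f :: "'a \<Rightarrow> ennreal"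
  assumes "countable I"
  shows "(\<Sum>\<^sub>\<infinity>i\<in>I. c * f i) = c * (\<Sum>\<^sub>\<infinity>i\<in>I. f i)"
  using nn_integral_count_space_infsum[OF assms, of "\<lambda>i. c * f i"]
    nn_integral_count_space_infsum[OF assms, of f]
    nn_integral_cmult[of f "count_space I" c] by simp

lemma infsum_Un_le:
  fixes f :: "'a \<Rightarrow> ennreal"
  shows "infsum f (X \<union> Y) \<le> infsum f X + infsum f Y"
proof -
  have "X \<union> Y = X \<union> (Y - X)" by blast
  moreover have "infsum f (X \<union> (Y - X)) = infsum f X + infsum f (Y - X)"
    by (rule infsum_Un_disjoint) auto
  ultimately have "infsum f (X \<union> Y) = infsum f X + infsum f (Y - X)" by simp
  also have "\<dots> \<le> infsum f X + infsum f Y"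
    by (intro add_left_mono infsum_mono_set) auto
  finally show ?thesis .
qed

lemma OM1: "S' \<subseteq> S \<Longrightarrow> A \<subseteq> \<Union>S' \<Longrightarrow> outer_measure S w A \<le> (\<Sum>\<^sub>\<infinity>E\<in>S'. ennreal (w E))"
  unfolding outer_measure_def by (rule INF_lower) auto

lemma OM2: "(\<And>S'. S' \<subseteq> S \<Longrightarrow> A \<subseteq> \<Union>S' \<Longrightarrow> c \<le> (\<Sum>\<^sub>\<infinity>E\<in>S'. ennreal (w E))) \<Longrightarrow> c \<le> outer_measure S w A"
  unfolding outer_measure_def by (rule INF_greatest) auto

lemma strip_sub_same: "strip m l \<subseteq> strip m' l' \<Longrightarrow> l' \<le> l \<Longrightarrow> strip m l = strip m' l'"
proof -
  assume a: "strip m l \<subseteq> strip m' l'" "l' \<le> l"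
  hence d: "dyI m l \<subseteq> dyI m' l'" by (simp add: strip_sub_iff)
  obtain x where x: "x \<in> dyI m l" using dyI_ne by blast
  have "dyI m' l' \<subseteq> dyI m l" using dy_nest[OF a(2), of x m' m] x d by blast
  thus ?thesis using a(1) by (simp add: strip_sub_iff subset_antisym)
qed

lemma strips_level: "strip m l \<in> strips L \<Longrightarrow> l \<le> L"
  by (auto simp: strips_mem dest: strip_inj)

lemma MAX:
  assumes S: "\<S> \<subseteq> strips L" and E: "E \<in> \<S>"
  shows "\<exists>E'\<in>Mc \<S>. E \<subseteq> E'"
proof -
  obtain m0 l0 where E0: "E = strip m0 l0" by (meson S E strips_mem subsetD)
  define Lv where "Lv = {l. \<exists>m. strip m l \<in> \<S> \<and> E \<subseteq> strip m l}"
  have sub: "Lv \<subseteq> {l0..L}"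
  proof
    fix l assume "l \<in> Lv"
    then obtain m where m: "strip m l \<in> \<S>" "E \<subseteq> strip m l" by (auto simp: Lv_def)
    have "l \<le> L" using m S strips_level by blast
    moreover have "l0 \<le> l" using m E0 by (simp add: strip_sub_iff dyI_level)
    ultimately show "l \<in> {l0..L}" by simp
  qed
  hence fin: "finite Lv" by (rule finite_subset) simp
  have "l0 \<in> Lv" using E E0 by (auto simp: Lv_def)
  hence ne: "Lv \<noteq> {}" by blast
  define ls where "ls = Max Lv"
  have "ls \<in> Lv" using fin ne by (simp add: ls_def)
  then obtain ms where ms: "strip ms ls \<in> \<S>" "E \<subseteq> strip ms ls" by (auto simp: Lv_def)
  have "strip ms ls \<in> Mc \<S>"
    unfolding Mc_def
  proof (intro CollectI conjI ballI impI)
    show "strip ms ls \<in> \<S>" by fact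
    fix F assume F: "F \<in> \<S>" "strip ms ls \<subseteq> F"
    obtain m' l' where F': "F = strip m' l'" by (meson F S strips_mem subsetD)
    have "l' \<in> Lv" using F F' ms by (auto simp: Lv_def)
    hence "l' \<le> ls" using fin by (simp add: ls_def)
    thus "F = strip ms ls" using strip_sub_same F F' by metis
  qed
  thus ?thesis using ms by blast
qed

lemma Mc_sub: "Mc \<S> \<subseteq> \<S>" by (auto simp: Mc_def)

lemma Mc_Union: "\<S> \<subseteq> strips L \<Longrightarrow> \<Union>(Mc \<S>) = \<Union>\<S>"
  using MAX[of \<S> L] Mc_sub[of \<S>] by blast

lemma Mc_disj:
  assumes S: "\<S> \<subseteq> strips L" and E: "E \<in> Mc \<S>" and F: "F \<in> Mc \<S>" and ne: "E \<noteq> F"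
  shows "fst ` E \<inter> fst ` F = {}"
proof -
  obtain m l m' l' where EF: "E = strip m l" "F = strip m' l'"
    using S E F Mc_sub by (metis strips_mem subsetD)
  have "\<not> strip m l \<subseteq> strip m' l'" using E F ne EF unfolding Mc_def by blast
  moreover have "\<not> strip m' l' \<subseteq> strip m l" using E F ne EF unfolding Mc_def by blast
  ultimately have "\<not> dyI m l \<subseteq> dyI m' l'" "\<not> dyI m' l' \<subseteq> dyI m l" by (simp_all add: strip_sub_iff)
  hence "dyI m l \<inter> dyI m' l' = {}" using dy_cases by blast
  thus ?thesis using EF by (simp add: fst_strip)
qed

lemma Mc_disjoint: "\<S> \<subseteq> strips L \<Longrightarrow> disjoint (Mc \<S>)"
  unfolding disjoint_def
proof (intro ballI impI)
  fix E F assume "\<S> \<subseteq> strips L" "E \<in> Mc \<S>" "F \<in> Mc \<S>" "E \<noteq> F"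
  hence "fst ` E \<inter> fst ` F = {}" by (rule Mc_disj)
  thus "E \<inter> F = {}" by blast
qed

lemma Mc_disjoint_family: "\<S> \<subseteq> strips L \<Longrightarrow> disjoint_family_on (\<lambda>E. fst ` E \<inter> P) (Mc \<S>)"
  unfolding disjoint_family_on_def using Mc_disj by blast

lemma fst_Union_meas: "D \<subseteq> strips L \<Longrightarrow> fst ` \<Union>D \<in> sets lborel"
proof -
  assume D: "D \<subseteq> strips L"
  have eq: "fst ` \<Union>D = \<Union>((\<lambda>E. fst ` E) ` D)" by blast
  have "countable D" using D strips_countable countable_subset by blast
  moreover have "(\<lambda>E. fst ` E) ` D \<subseteq> sets lborel"
  proof
    fix X assume "X \<in> (\<lambda>E. fst ` E) ` D"
    then obtain E where "E \<in> D" "X = fst ` E" by blast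
    then obtain m l where "E = strip m l" using D strips_mem by blast
    thus "X \<in> sets lborel" using \<open>X = _\<close> by (simp add: fst_strip)
  qed
  ultimately show ?thesis unfolding eq by (intro sets.countable_Union) auto
qed

lemma fst_strips_meas: "E \<in> strips L \<Longrightarrow> fst ` E \<in> sets lborel"
  by (auto simp: strips_mem fst_strip)

lemma half2: "(a::ennreal) / 2 * 2 = a" by (simp add: ennreal_divide_times)
lemma half_le: "(x::ennreal) / 2 \<le> x"
proof -
  have "x / 2 * 1 \<le> x / 2 * 2" by (intro mult_left_mono) auto
  thus ?thesis using half2[of x] by simp
qed
lemma half_le2: "(a::ennreal) / 2 \<le> b \<Longrightarrow> a \<le> 2 * b"
  by (metis half2 mult.commute mult_right_mono zero_le)
lemma half_less: "\<not> ((a::ennreal) / 2 \<le> b) \<Longrightarrow> 2 * b \<le> a"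
  by (metis half2 mult.commute mult_right_mono zero_le linorder_not_le less_imp_le)

lemma Q_sub_N: "D1 \<subseteq> strips L \<Longrightarrow> D1 \<subseteq> Nc L D1"
proof
  fix E assume D1: "D1 \<subseteq> strips L" and E: "E \<in> D1"
  have "fst ` E \<inter> fst ` \<Union>D1 = fst ` E" using E by blast
  moreover have "x / 2 \<le> (x::ennreal)" for x
    by (rule half_le)
  ultimately show "E \<in> Nc L D1" using D1 E by (auto simp: Nc_def)
qed

lemma Nc_mono: assumes "D1 \<subseteq> D2" "D2 \<subseteq> strips L" shows "Nc L D1 \<subseteq> Nc L D2"
proof
  fix E assume E: "E \<in> Nc L D1"
  have "emeasure lborel (fst ` E \<inter> fst ` \<Union>D1) \<le> emeasure lborel (fst ` E \<inter> fst ` \<Union>D2)"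
    using E assms fst_Union_meas[OF assms(2)] fst_strips_meas[of E L]
    by (intro emeasure_mono) (auto simp: Nc_def)
  thus "E \<in> Nc L D2" using E by (auto simp: Nc_def)
qed

lemma Qc_sub: "Qc L A \<subseteq> strips L" by (auto simp: Qc_def)
lemma Nc_sub: "Nc L A \<subseteq> strips L" by (auto simp: Nc_def)
lemma Cc_sub: "Cc L A \<subseteq> strips L" using Mc_sub Nc_sub unfolding Cc_def by blast

lemma Cc_Union: "\<Union>(Cc L A) = \<Union>(Nc L (Qc L A))"
  unfolding Cc_def using Mc_Union Nc_sub by blast

lemma point_strip_Q:
  assumes "(x, s, xi) \<in> A" "0 < s" "s \<le> 2 powi L"
  shows "strip (dyidx (lev s) x) (lev s) \<in> Qc L A"
  using point_strip[OF assms(2), of x xi] assms lev_le[OF assms(2,3)]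
  unfolding Qc_def strips_mem by blast

lemma cover_Cc: assumes "A \<subseteq> YL L" shows "A \<subseteq> \<Union>(Cc L A)"
proof
  fix p assume p: "p \<in> A"
  obtain x s xi where pe: "p = (x, s, xi)" by (cases p) auto
  have s: "0 < s" "s \<le> 2 powi L" using p pe assms by (auto simp: YL_def)
  have "strip (dyidx (lev s) x) (lev s) \<in> Nc L (Qc L A)"
    using point_strip_Q[of x s xi A L] p pe s Q_sub_N[OF Qc_sub] by blast
  moreover have "p \<in> strip (dyidx (lev s) x) (lev s)"
    using point_strip[OF s(1)] pe by (simp add: plus_part_def)
  ultimately show "p \<in> \<Union>(Cc L A)" unfolding Cc_Union by blast
qed

lemma mono_Cc: "A \<subseteq> A' \<Longrightarrow> \<Union>(Cc L A) \<subseteq> \<Union>(Cc L A')"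
proof -
  assume "A \<subseteq> A'"
  hence "Qc L A \<subseteq> Qc L A'" by (auto simp: Qc_def)
  hence "Nc L (Qc L A) \<subseteq> Nc L (Qc L A')" using Nc_mono Qc_sub by blast
  thus ?thesis unfolding Cc_Union by blast
qed


lemma strip_emeasure: "E \<in> strips L \<Longrightarrow> emeasure lborel (fst ` E) = ennreal (sigma_strip E)"
  by (auto simp: strips_mem fst_strip sigma_strip emeasure_dyI)

lemma sum_Mc_emeasure:
  assumes "S \<subseteq> strips L"
  shows "emeasure lborel (fst ` \<Union>(Mc S)) = (\<Sum>\<^sub>\<infinity>F\<in>Mc S. ennreal (sigma_strip F))"
proof -
  have MS: "Mc S \<subseteq> strips L" using assms Mc_sub by blast
  have "fst ` \<Union>(Mc S) = \<Union>((\<lambda>F. fst ` F) ` Mc S)" by blast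
  also have "emeasure lborel \<dots> = (\<Sum>\<^sub>\<infinity>F\<in>Mc S. emeasure lborel (fst ` F))"
  proof (rule emeasure_UN_infsum)
    show "countable (Mc S)" using MS strips_countable countable_subset by blast
    show "disjoint_family_on (\<lambda>F. fst ` F) (Mc S)"
      unfolding disjoint_family_on_def using Mc_disj[OF assms] by blast
    show "\<And>i. i \<in> Mc S \<Longrightarrow> fst ` i \<in> sets lborel" using MS fst_strips_meas by blast
  qed
  also have "\<dots> = (\<Sum>\<^sub>\<infinity>F\<in>Mc S. ennreal (sigma_strip F))"
    using MS strip_emeasure by (intro infsum_cong) blast
  finally show ?thesis .
qed

lemma P_le_mu: "emeasure lborel (fst ` \<Union>(Qc L A)) \<le> muL L A"
  unfolding muL_def
proof (rule OM2)
  fix S' assume S': "S' \<subseteq> strips L" "A \<subseteq> \<Union>S'"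
  have cov: "fst ` \<Union>(Qc L A) \<subseteq> fst ` \<Union>(Mc S')"
  proof
    fix x assume "x \<in> fst ` \<Union>(Qc L A)"
    then obtain E p0 where E: "E \<in> Qc L A" "p0 \<in> E" "x = fst p0" by blast
    obtain m l where Eml: "E = strip m l" "l \<le> L" using E(1) by (auto simp: Qc_def strips_mem)
    have xI: "x \<in> dyI m l" using E Eml by (auto simp: strip_def)
    obtain p where p: "p \<in> plus_part E" "p \<in> A" using E(1) by (auto simp: Qc_def)
    obtain x' s xi where pe: "p = (x', s, xi)" by (cases p) auto
    obtain F where F: "F \<in> S'" "p \<in> F" using p S' by blast
    obtain m' l' where F': "F = strip m' l'" using F S' strips_mem by blast
    have x': "x' \<in> dyI m l" "2 powi (l - 1) < s" using p pe Eml by (auto simp: plus_strip strip_mem)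
    have x'': "x' \<in> dyI m' l'" "s \<le> 2 powi l'" using F pe F' by (auto simp: strip_mem)
    have "(2::real) powi (l - 1) < 2 powi l'" using x' x'' by linarith
    hence "l \<le> l'" by (simp add: p2_less_iff)
    hence "dyI m l \<subseteq> dyI m' l'" using dy_nest x' x'' by blast
    hence "x \<in> fst ` F" using xI F' by (auto simp: fst_strip)
    moreover obtain F2 where "F2 \<in> Mc S'" "F \<subseteq> F2" using MAX[OF S'(1) F(1)] by blast
    ultimately show "x \<in> fst ` \<Union>(Mc S')" by blast
  qed
  have "emeasure lborel (fst ` \<Union>(Qc L A)) \<le> emeasure lborel (fst ` \<Union>(Mc S'))"
  proof (rule emeasure_mono[OF cov])
    have "Mc S' \<subseteq> strips L" using Mc_sub S'(1) by blast
    thus "fst ` \<Union>(Mc S') \<in> sets lborel" by (rule fst_Union_meas)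
  qed
  also have "\<dots> = (\<Sum>\<^sub>\<infinity>F\<in>Mc S'. ennreal (sigma_strip F))" using S'(1) by (rule sum_Mc_emeasure)
  also have "\<dots> \<le> (\<Sum>\<^sub>\<infinity>F\<in>S'. ennreal (sigma_strip F))" using Mc_sub by (rule infsum_mono_set)
  finally show "emeasure lborel (fst ` \<Union>(Qc L A)) \<le> (\<Sum>\<^sub>\<infinity>F\<in>S'. ennreal (sigma_strip F))" .
qed

lemma part1_bound:
  assumes Phi: "Phi \<ge> 2"
  shows "muL L (\<Union>(Cc L A)) \<le> ennreal Phi * muL L A"
proof -
  define Q where "Q = Qc L A"
  define P where "P = fst ` \<Union>Q"
  define C where "C = Cc L A"
  have CS: "C \<subseteq> strips L" using Cc_sub C_def by blast
  have Pm: "P \<in> sets lborel" unfolding P_def Q_def using Qc_sub by (rule fst_Union_meas)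
  have cC: "countable C" using CS strips_countable countable_subset by blast
  have CN: "C \<subseteq> Nc L Q" unfolding C_def Cc_def Q_def using Mc_sub by blast
  have "muL L (\<Union>C) \<le> (\<Sum>\<^sub>\<infinity>E\<in>C. ennreal (sigma_strip E))"
    unfolding muL_def using CS by (intro OM1) auto
  also have "\<dots> = (\<Sum>\<^sub>\<infinity>E\<in>C. emeasure lborel (fst ` E))"
    using CS strip_emeasure by (intro infsum_cong) (metis subsetD)
  also have "\<dots> \<le> (\<Sum>\<^sub>\<infinity>E\<in>C. 2 * emeasure lborel (fst ` E \<inter> P))"
  proof (rule infsum_mono)
    fix E assume "E \<in> C"
    hence "emeasure lborel (fst ` E) / 2 \<le> emeasure lborel (fst ` E \<inter> P)"
      using CN by (auto simp: Nc_def P_def)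
    thus "emeasure lborel (fst ` E) \<le> 2 * emeasure lborel (fst ` E \<inter> P)" by (rule half_le2)
  qed auto
  also have "\<dots> = 2 * (\<Sum>\<^sub>\<infinity>E\<in>C. emeasure lborel (fst ` E \<inter> P))"
    using cC by (rule infsum_cmult_ennreal)
  also have "(\<Sum>\<^sub>\<infinity>E\<in>C. emeasure lborel (fst ` E \<inter> P)) = emeasure lborel (\<Union>E\<in>C. fst ` E \<inter> P)"
  proof (rule emeasure_UN_infsum[symmetric])
    show "countable C" by fact
    show "disjoint_family_on (\<lambda>E. fst ` E \<inter> P) C"
      unfolding C_def Cc_def using Mc_disjoint_family Nc_sub by blast
    show "\<And>i. i \<in> C \<Longrightarrow> fst ` i \<inter> P \<in> sets lborel" using CS Pm fst_strips_meas by blast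
  qed
  also have "emeasure lborel (\<Union>E\<in>C. fst ` E \<inter> P) \<le> emeasure lborel P"
    using Pm by (intro emeasure_mono) auto
  also have "emeasure lborel P \<le> muL L A" unfolding P_def Q_def by (rule P_le_mu)
  finally have "muL L (\<Union>C) \<le> 2 * muL L A" by (simp add: mult_left_mono)
  also have "\<dots> \<le> ennreal Phi * muL L A"
    using Phi by (intro mult_right_mono) (auto simp: ennreal_le_iff[symmetric])
  finally show ?thesis unfolding C_def .
qed

lemma part1:
  assumes "Phi \<ge> 2"
  shows "covering_function (YL L) (muL L) (strips L) Phi (Cc L)"
  unfolding covering_function_def
proof (intro conjI allI impI)
  fix A assume "A \<subseteq> YL L"
  show "Cc L A \<subseteq> strips L" by (rule Cc_sub)
  show "disjoint (Cc L A)" unfolding Cc_def by (rule Mc_disjoint[OF Nc_sub])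
  show "A \<subseteq> \<Union>(Cc L A)" by (rule cover_Cc) fact
  show "muL L (\<Union>(Cc L A)) \<le> ennreal Phi * muL L A" by (rule part1_bound) fact
next
  fix A A' :: "pt set" assume "A \<subseteq> A' \<and> A' \<subseteq> YL L"
  thus "\<Union>(Cc L A) \<subseteq> \<Union>(Cc L A')" using mono_Cc by blast
qed

lemma arith_K:
  fixes a b c :: ennreal
  assumes K: "K \<ge> 2" and bc: "2 * c \<le> b"
  shows "b + ennreal K * (a + c) \<le> ennreal K * (a + b)"
proof -
  have "ennreal (K / 2 * 2) = ennreal (K / 2) * 2" using K by (subst ennreal_mult) auto
  hence e: "ennreal K = ennreal (K / 2) * 2" by simp
  have "ennreal K * c = ennreal (K / 2) * (2 * c)" by (simp add: e mult.assoc)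
  also have "\<dots> \<le> ennreal (K / 2) * b" using bc by (rule mult_left_mono) simp
  finally have kc: "ennreal K * c \<le> ennreal (K / 2) * b" .
  have "b + ennreal (K / 2) * b = ennreal (1 + K / 2) * b"
    using K by (simp add: ennreal_plus[symmetric] distrib_right)
  also have "\<dots> \<le> ennreal K * b" using K by (intro mult_right_mono ennreal_leI) auto
  finally have kb: "b + ennreal (K / 2) * b \<le> ennreal K * b" .
  have "b + ennreal K * (a + c) = ennreal K * a + (b + ennreal K * c)"
    by (simp add: distrib_left add_ac)
  also have "\<dots> \<le> ennreal K * a + (b + ennreal (K / 2) * b)" using kc by (intro add_left_mono) simp
  also have "\<dots> \<le> ennreal K * a + ennreal K * b" using kb by (rule add_left_mono)
  finally show ?thesis by (simp add: distrib_left)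
qed


lemma subtree:
  assumes l: "l \<le> L"
    and small: "2 * emeasure lborel (dyI m l \<inter> fst ` \<Union>(Qc L W)) \<le> ennreal (2 powi l)"
  shows "\<exists>F \<subseteq> trees L. tree m l n \<inter> W \<subseteq> \<Union>F \<and>
           2 * (\<Sum>\<^sub>\<infinity>T\<in>F. ennreal (tau_tree T)) \<le> ennreal (2 powi l)"
proof -
  define P where "P = fst ` \<Union>(Qc L W)"
  define Qin where "Qin = {E \<in> Qc L W. fst ` E \<subseteq> dyI m l}"
  define M where "M = Mc Qin"
  have QS: "Qin \<subseteq> strips L" unfolding Qin_def using Qc_sub[of L W] by blast
  have MQ: "M \<subseteq> Qin" using Mc_sub M_def by blast
  have MS: "M \<subseteq> strips L" using QS MQ by blast
  have "\<forall>E\<in>M. \<exists>mE lE. strip mE lE = E" using MS unfolding strips_def by blast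
  then obtain mf lf where mlf: "\<And>E. E \<in> M \<Longrightarrow> strip (mf E) (lf E) = E" by metis
  have fstE: "fst ` E = dyI (mf E) (lf E)" if "E \<in> M" for E
    using mlf[OF that] fst_strip[of "mf E" "lf E"] by simp
  have lfl: "lf E \<le> l" if "E \<in> M" for E
  proof -
    have "fst ` E \<subseteq> dyI m l" using that MQ Qin_def by blast
    thus ?thesis using fstE[OF that] dyI_level by simp
  qed
  define sub where "sub E = tree (mf E) (lf E) (Nidx n l (lf E))" for E
  define F where "F = sub ` M"
  have FT: "F \<subseteq> trees L"
  proof
    fix T assume "T \<in> F"
    then obtain E where E: "E \<in> M" "T = sub E" using F_def by blast
    have "lf E \<le> L" using lfl[OF E(1)] l by simp
    thus "T \<in> trees L" using E unfolding sub_def trees_mem by blast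
  qed
  have cov: "tree m l n \<inter> W \<subseteq> \<Union>F"
  proof
    fix p assume p: "p \<in> tree m l n \<inter> W"
    obtain x s xi where pe: "p = (x, s, xi)" by (cases p) auto
    have pt: "x \<in> dyI m l" "0 < s" "s \<le> 2 powi l" "xi \<in> dyI (Nidx n l (lev s)) (- lev s)"
      using p pe by (auto simp: tree_mem)
    have sl: "lev s \<le> l" using lev_le pt by blast
    have sL: "s \<le> 2 powi L" using pt(3) l by (meson order_trans p2_le_iff)
    define E0 where "E0 = strip (dyidx (lev s) x) (lev s)"
    have E0Q: "E0 \<in> Qc L W" unfolding E0_def using point_strip_Q[of x s xi W L] p pe pt sL by blast
    have xE0: "x \<in> dyI (dyidx (lev s) x) (lev s)" by (simp add: mem_dyI)
    have "dyI (dyidx (lev s) x) (lev s) \<subseteq> dyI m l" using dy_nest[OF sl xE0] pt(1) by blast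
    hence "E0 \<in> Qin" using E0Q by (simp add: Qin_def E0_def fst_strip)
    then obtain E where E: "E \<in> M" "E0 \<subseteq> E" using MAX[OF QS] M_def by blast
    have "E0 \<subseteq> strip (mf E) (lf E)" using E mlf[OF E(1)] by simp
    hence "dyI (dyidx (lev s) x) (lev s) \<subseteq> dyI (mf E) (lf E)"
      by (simp add: E0_def strip_sub_iff)
    hence xE: "x \<in> dyI (mf E) (lf E)" and lsE: "lev s \<le> lf E" using xE0 dyI_level by blast+
    have "s \<le> 2 powi lf E" using pt(3) lev(2)[OF pt(2)] lsE by (meson order_trans p2_le_iff)
    moreover have "Nidx (Nidx n l (lf E)) (lf E) (lev s) = Nidx n l (lev s)"
      using Nidx_trans[OF lsE lfl[OF E(1)]] .
    ultimately have "p \<in> sub E" using pt xE pe by (simp add: sub_def tree_mem)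
    thus "p \<in> \<Union>F" using E(1) F_def by blast
  qed
  have "(\<Sum>\<^sub>\<infinity>T\<in>F. ennreal (tau_tree T)) \<le> (\<Sum>\<^sub>\<infinity>E\<in>M. ennreal (tau_tree (sub E)))"
    unfolding F_def by (rule infsum_image_le)
  also have "\<dots> = (\<Sum>\<^sub>\<infinity>E\<in>M. ennreal (sigma_strip E))"
  proof (rule infsum_cong)
    fix E assume "E \<in> M"
    hence "sigma_strip E = 2 powi lf E" using sigma_strip[of "mf E" "lf E"] mlf by simp
    thus "ennreal (tau_tree (sub E)) = ennreal (sigma_strip E)"
      by (simp add: sub_def tau_tree)
  qed
  also have "\<dots> = emeasure lborel (fst ` \<Union>M)" unfolding M_def using QS by (rule sum_Mc_emeasure[symmetric])
  also have "\<dots> \<le> emeasure lborel (dyI m l \<inter> P)"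
  proof (rule emeasure_mono)
    show "fst ` \<Union>M \<subseteq> dyI m l \<inter> P" using MQ unfolding Qin_def P_def by blast
    have "P \<in> sets lborel" unfolding P_def using Qc_sub by (rule fst_Union_meas)
    thus "dyI m l \<inter> P \<in> sets lborel" by simp
  qed
  finally have "2 * (\<Sum>\<^sub>\<infinity>T\<in>F. ennreal (tau_tree T)) \<le> 2 * emeasure lborel (dyI m l \<inter> P)"
    by (rule mult_left_mono) simp
  also have "\<dots> \<le> ennreal (2 powi l)" using small P_def by simp
  finally show ?thesis using FT cov by blast
qed

lemma part2_ineq:
  assumes K: "K \<ge> 2" and DB: "D \<inter> \<Union>(Cc L W) = {}"
  shows "nuL L (U \<inter> D) + ennreal K * nuL L (U \<inter> W) \<le> ennreal K * nuL L (U \<inter> (D \<union> W))"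
proof -
  define B where "B = \<Union>(Cc L W)"
  define P where "P = fst ` \<Union>(Qc L W)"
  define LHS where "LHS = nuL L (U \<inter> D) + ennreal K * nuL L (U \<inter> W)"
  have Kp: "0 < ennreal K" using K by simp
  have main: "LHS \<le> ennreal K * (\<Sum>\<^sub>\<infinity>T\<in>S'. ennreal (tau_tree T))"
    if S': "S' \<subseteq> trees L" "U \<inter> (D \<union> W) \<subseteq> \<Union>S'" for S'
  proof -
    define S1 where "S1 = {T \<in> S'. T \<subseteq> B}"
    define S2 where "S2 = S' - S1"
    have S2T: "S2 \<subseteq> trees L" using S' S2_def by blast
    have S1T: "S1 \<subseteq> trees L" using S' S1_def by blast
    have ex: "\<exists>F. F \<subseteq> trees L \<and> T \<inter> W \<subseteq> \<Union>F \<and> 2 * (\<Sum>\<^sub>\<infinity>T'\<in>F. ennreal (tau_tree T')) \<le> ennreal (tau_tree T)"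
      if T: "T \<in> S2" for T
    proof -
      obtain m l n where Tm: "T = tree m l n" "l \<le> L" using T S2T unfolding trees_def by blast
      have "strip m l \<notin> Nc L (Qc L W)"
      proof
        assume "strip m l \<in> Nc L (Qc L W)"
        hence "strip m l \<subseteq> B" unfolding B_def Cc_Union by blast
        hence "T \<subseteq> B" using Tm tree_sub_strip by blast
        thus False using T S2_def S1_def by blast
      qed
      moreover have "strip m l \<in> strips L" using Tm strips_mem by blast
      ultimately have "\<not> (emeasure lborel (dyI m l) / 2 \<le> emeasure lborel (dyI m l \<inter> P))"
        by (auto simp: Nc_def fst_strip P_def)
      hence "2 * emeasure lborel (dyI m l \<inter> P) \<le> emeasure lborel (dyI m l)"
        by (rule half_less)
      hence "2 * emeasure lborel (dyI m l \<inter> P) \<le> ennreal (2 powi l)"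
        by (simp only: emeasure_dyI)
      from subtree[OF Tm(2) this[unfolded P_def], where n=n]
      show ?thesis using Tm by (simp add: tau_tree)
    qed
    define Fs where "Fs T = (SOME F. F \<subseteq> trees L \<and> T \<inter> W \<subseteq> \<Union>F \<and>
        2 * (\<Sum>\<^sub>\<infinity>T'\<in>F. ennreal (tau_tree T')) \<le> ennreal (tau_tree T))" for T
    have Fs: "Fs T \<subseteq> trees L \<and> T \<inter> W \<subseteq> \<Union>(Fs T) \<and>
        2 * (\<Sum>\<^sub>\<infinity>T'\<in>Fs T. ennreal (tau_tree T')) \<le> ennreal (tau_tree T)" if "T \<in> S2" for T
      unfolding Fs_def by (rule someI_ex[OF ex[OF that]])
    define a where "a = (\<Sum>\<^sub>\<infinity>T\<in>S1. ennreal (tau_tree T))"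
    define b where "b = (\<Sum>\<^sub>\<infinity>T\<in>S2. ennreal (tau_tree T))"
    define c where "c = (\<Sum>\<^sub>\<infinity>T\<in>S2. (\<Sum>\<^sub>\<infinity>T'\<in>Fs T. ennreal (tau_tree T')))"
    have cS2: "countable S2" by (rule countable_subset[OF S2T trees_countable])
    have nD: "nuL L (U \<inter> D) \<le> b"
      unfolding nuL_def b_def
    proof (rule OM1[OF S2T])
      show "U \<inter> D \<subseteq> \<Union>S2"
      proof
        fix p assume p: "p \<in> U \<inter> D"
        then obtain T where "T \<in> S'" "p \<in> T" using S' by blast
        moreover have "p \<notin> B" using p DB B_def by blast
        ultimately show "p \<in> \<Union>S2" unfolding S2_def S1_def by blast
      qed
    qed
    have nW: "nuL L (U \<inter> W) \<le> a + c"
    proof -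
      have "nuL L (U \<inter> W) \<le> (\<Sum>\<^sub>\<infinity>T\<in>S1 \<union> \<Union>(Fs ` S2). ennreal (tau_tree T))"
        unfolding nuL_def
      proof (rule OM1)
        show "S1 \<union> \<Union>(Fs ` S2) \<subseteq> trees L" using S1T Fs by blast
        show "U \<inter> W \<subseteq> \<Union>(S1 \<union> \<Union>(Fs ` S2))"
        proof
          fix p assume p: "p \<in> U \<inter> W"
          then obtain T where T: "T \<in> S'" "p \<in> T" using S' by blast
          show "p \<in> \<Union>(S1 \<union> \<Union>(Fs ` S2))"
          proof (cases "T \<in> S1")
            case True thus ?thesis using T by blast
          next
            case False
            hence "T \<in> S2" using T S2_def by blast
            hence "p \<in> \<Union>(Fs T)" using Fs p T by blast
            thus ?thesis using \<open>T \<in> S2\<close> by blast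
          qed
        qed
      qed
      also have "\<dots> \<le> a + (\<Sum>\<^sub>\<infinity>T\<in>\<Union>(Fs ` S2). ennreal (tau_tree T))"
        unfolding a_def by (rule infsum_Un_le)
      also have "\<dots> \<le> a + c" unfolding c_def by (intro add_left_mono infsum_UB) auto
      finally show ?thesis .
    qed
    have bc: "2 * c \<le> b"
    proof -
      have "2 * c = (\<Sum>\<^sub>\<infinity>T\<in>S2. 2 * (\<Sum>\<^sub>\<infinity>T'\<in>Fs T. ennreal (tau_tree T')))"
        unfolding c_def using cS2 by (rule infsum_cmult_ennreal[symmetric])
      also have "\<dots> \<le> b" unfolding b_def using Fs by (intro infsum_mono) auto
      finally show ?thesis .
    qed
    have "LHS \<le> b + ennreal K * (a + c)"
      unfolding LHS_def using nD nW by (intro add_mono mult_left_mono) auto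
    also have "\<dots> \<le> ennreal K * (a + b)" using K bc by (rule arith_K)
    also have "a + b = (\<Sum>\<^sub>\<infinity>T\<in>S'. ennreal (tau_tree T))"
    proof -
      have "S' = S1 \<union> S2" "S1 \<inter> S2 = {}" using S1_def S2_def by auto
      thus ?thesis unfolding a_def b_def by (simp add: infsum_Un_disjoint)
    qed
    finally show ?thesis .
  qed
  have "LHS / ennreal K \<le> nuL L (U \<inter> (D \<union> W))"
    unfolding nuL_def
  proof (rule OM2)
    fix S' assume "S' \<subseteq> trees L" "U \<inter> (D \<union> W) \<subseteq> \<Union>S'"
    thus "LHS / ennreal K \<le> (\<Sum>\<^sub>\<infinity>T\<in>S'. ennreal (tau_tree T))"
      using main Kp by (intro divide_le_posI_ennreal) auto
  qed
  hence "LHS / ennreal K * ennreal K \<le> nuL L (U \<inter> (D \<union> W)) * ennreal K"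
    by (rule mult_right_mono) simp
  moreover have "LHS / ennreal K * ennreal K = LHS"
    using K by (simp add: ennreal_divide_times)
  ultimately show ?thesis unfolding LHS_def by (simp add: mult.commute)
qed


theorem lemma4p6:
  fixes L :: int and Phi K :: real
  assumes "Phi \<ge> 2" and "K \<ge> 2"
  shows "canopy_condition (YL L) (muL L) (nuL L) (strips L) Phi K (Cc L)"
  unfolding canopy_condition_def
proof (intro conjI allI impI)
  show "covering_function (YL L) (muL L) (strips L) Phi (Cc L)" by (rule part1) fact
next
  fix \<A> D assume H: "caratheodory (YL L) (nuL L) K \<A> \<and> D \<subseteq> YL L \<and> D \<inter> \<Union>(Cc L (\<Union>\<A>)) = {}"
  show "caratheodory (YL L) (nuL L) K (insert D \<A>)"
  proof (cases "D \<in> \<A>")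
    case True
    thus ?thesis using H by (simp add: insert_absorb)
  next
    case False
    define W where "W = \<Union>\<A>"
    have car: "disjoint \<A>" "\<forall>A\<in>\<A>. A \<subseteq> YL L"
      "\<And>U. U \<subseteq> YL L \<Longrightarrow> (\<Sum>\<^sub>\<infinity>A\<in>\<A>. nuL L (U \<inter> A)) \<le> ennreal K * nuL L (U \<inter> \<Union>\<A>)"
      using H unfolding caratheodory_def by auto
    have DY: "D \<subseteq> YL L" and DB: "D \<inter> \<Union>(Cc L W) = {}" using H W_def by auto
    have WY: "W \<subseteq> YL L" using car(2) W_def by blast
    have DW: "D \<inter> W = {}" using cover_Cc[OF WY] DB by blast
    show ?thesis
      unfolding caratheodory_def
    proof (intro conjI allI impI ballI)
      have "\<forall>A\<in>\<A>. A \<noteq> D \<longrightarrow> disjnt D A \<and> disjnt A D"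
        using DW W_def by (auto simp: disjnt_def)
      thus "disjoint (insert D \<A>)" using car(1) by (simp add: pairwise_insert)
    next
      fix A assume "A \<in> insert D \<A>"
      thus "A \<subseteq> YL L" using car(2) DY by blast
    next
      fix U :: "pt set" assume U: "U \<subseteq> YL L"
      have "(\<Sum>\<^sub>\<infinity>A\<in>insert D \<A>. nuL L (U \<inter> A)) = nuL L (U \<inter> D) + (\<Sum>\<^sub>\<infinity>A\<in>\<A>. nuL L (U \<inter> A))"
        using False by (simp add: infsum_insert)
      also have "\<dots> \<le> nuL L (U \<inter> D) + ennreal K * nuL L (U \<inter> W)"
        using car(3)[OF U] W_def by (simp add: add_left_mono)
      also have "\<dots> \<le> ennreal K * nuL L (U \<inter> (D \<union> W))"
        using assms(2) DB by (rule part2_ineq)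
      also have "U \<inter> (D \<union> W) = U \<inter> \<Union>(insert D \<A>)" using W_def by auto
      finally show "(\<Sum>\<^sub>\<infinity>A\<in>insert D \<A>. nuL L (U \<inter> A)) \<le> ennreal K * nuL L (U \<inter> \<Union>(insert D \<A>))" .
    qed
  qed
qed

end
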